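(* Let $K$ be a field and let $P$ be a poset that is not locally finite. Then there is no locally finite poset $Q$ such that $FI(P)$ is isomorphic (as a $K$-algebra) to the incidence algebra $I(Q)$.
   Context: $K$ is a field, $P$ an arbitrary poset. $I(P)$ is the set of functions $\alpha$ assigning to each pair $x\le y$ in $P$ a value $\alpha(x,y)\in K$. An element $\alpha\in I(P)$ is a finitary series if for all $x<y$ in $P$ there are only finitely many pairs $(u,v)$ with $x\le u<v\le y$ and $\alpha(u,v)\neq0$; $FI(P)$ is the set of finitary series. $FI(P)$ is an associative $K$-algebra under pointwise addition and convolution $(\alpha\beta)(x,y)=\sum_{x\le z\le y}\alpha(x,z)\beta(z,y)$. A poset $Q$ is locally finite if every interval $[x,y]=\{z: x\le z\le y\}$ is finite; for such $Q$, $I(Q)$ (all functions on pairs $x\le y$ in $Q$) is the usual incidence algebra under convolution. *)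

theory Defs
  imports Main
begin

text \<open>A poset is given by a carrier set C and a relation le that is a partial order on C.
  Series are functions of two arguments that vanish outside the pairs x \<le> y in C.\<close>

definition poset_on :: "'a set \<Rightarrow> ('a \<Rightarrow> 'a \<Rightarrow> bool) \<Rightarrow> bool" where
  "poset_on C le \<longleftrightarrow> (\<forall>x\<in>C. le x x) \<and>
     (\<forall>x\<in>C. \<forall>y\<in>C. le x y \<and> le y x \<longrightarrow> x = y) \<and>
     (\<forall>x\<in>C. \<forall>y\<in>C. \<forall>z\<in>C. le x y \<and> le y z \<longrightarrow> le x z)"

definition locally_finite_on :: "'a set \<Rightarrow> ('a \<Rightarrow> 'a \<Rightarrow> bool) \<Rightarrow> bool" where
  "locally_finite_on C le \<longleftrightarrow> (\<forall>x\<in>C. \<forall>y\<in>C. finite {z\<in>C. le x z \<and> le z y})"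

definition incidence_space :: "'a set \<Rightarrow> ('a \<Rightarrow> 'a \<Rightarrow> bool) \<Rightarrow> ('a \<Rightarrow> 'a \<Rightarrow> 'k::zero) set" where
  "incidence_space C le = {\<alpha>. \<forall>x y. \<not> (x \<in> C \<and> y \<in> C \<and> le x y) \<longrightarrow> \<alpha> x y = 0}"

definition finitary_space :: "'a set \<Rightarrow> ('a \<Rightarrow> 'a \<Rightarrow> bool) \<Rightarrow> ('a \<Rightarrow> 'a \<Rightarrow> 'k::zero) set" where
  "finitary_space C le = {\<alpha> \<in> incidence_space C le.
     \<forall>x\<in>C. \<forall>y\<in>C. le x y \<and> x \<noteq> y \<longrightarrow>
       finite {(u, v). u \<in> C \<and> v \<in> C \<and> le x u \<and> le u v \<and> u \<noteq> v \<and> le v y \<and> \<alpha> u v \<noteq> 0}}"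

text \<open>Convolution. The sum ranges over the z in [x,y] with nonzero summand; for finitary
  series (and for locally finite posets) this set is finite, so this is the usual sum.\<close>
definition conv :: "'a set \<Rightarrow> ('a \<Rightarrow> 'a \<Rightarrow> bool) \<Rightarrow> ('a \<Rightarrow> 'a \<Rightarrow> 'k::field)
    \<Rightarrow> ('a \<Rightarrow> 'a \<Rightarrow> 'k) \<Rightarrow> ('a \<Rightarrow> 'a \<Rightarrow> 'k)" where
  "conv C le \<alpha> \<beta> = (\<lambda>x y. if x \<in> C \<and> y \<in> C \<and> le x y then
      (\<Sum>z \<in> {z \<in> C. le x z \<and> le z y \<and> \<alpha> x z * \<beta> z y \<noteq> 0}. \<alpha> x z * \<beta> z y) else 0)"

definition alg_iso :: "'a set \<Rightarrow> ('a \<Rightarrow> 'a \<Rightarrow> bool) \<Rightarrow> ('a \<Rightarrow> 'a \<Rightarrow> 'k::field) set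
    \<Rightarrow> 'b set \<Rightarrow> ('b \<Rightarrow> 'b \<Rightarrow> bool) \<Rightarrow> ('b \<Rightarrow> 'b \<Rightarrow> 'k) set
    \<Rightarrow> (('a \<Rightarrow> 'a \<Rightarrow> 'k) \<Rightarrow> ('b \<Rightarrow> 'b \<Rightarrow> 'k)) \<Rightarrow> bool" where
  "alg_iso C le A D le' B \<phi> \<longleftrightarrow> bij_betw \<phi> A B \<and>
     (\<forall>\<alpha>\<in>A. \<forall>\<beta>\<in>A. \<phi> (\<lambda>x y. \<alpha> x y + \<beta> x y) = (\<lambda>x y. \<phi> \<alpha> x y + \<phi> \<beta> x y)) \<and>
     (\<forall>\<alpha>\<in>A. \<forall>\<beta>\<in>A. \<phi> (conv C le \<alpha> \<beta>) = conv D le' (\<phi> \<alpha>) (\<phi> \<beta>)) \<and>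
     (\<forall>c. \<forall>\<alpha>\<in>A. \<phi> (\<lambda>x y. c * \<alpha> x y) = (\<lambda>x y. c * \<phi> \<alpha> x y))"

end

theory Submission
  imports Defs
begin

lemma no_biorth:
  fixes r s :: "'i \<Rightarrow> 'w \<Rightarrow> 'k::field"
  assumes "finite W"
  shows "finite I \<Longrightarrow> card W < card I \<Longrightarrow> c \<noteq> 0 \<Longrightarrow>
    (\<forall>i\<in>I. \<forall>j\<in>I. (\<Sum>w\<in>W. r i w * s j w) = (if i = j then c else 0)) \<Longrightarrow> False"
  using assms
proof (induction W arbitrary: I r rule: finite_induct)
  case empty
  then obtain i where "i \<in> I" by fastforce
  then have "(\<Sum>w\<in>{}. r i w * s i w) = (if i = i then c else 0)" using empty.prems(4) by blast
  then show ?case using empty.prems(3) by simp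
next
  case (insert w0 W)
  show ?case
  proof (cases "\<forall>i\<in>I. r i w0 = 0")
    case True
    have "\<forall>i\<in>I. \<forall>j\<in>I. (\<Sum>w\<in>W. r i w * s j w) = (if i = j then c else 0)"
      using insert.prems(4) True insert.hyps by auto
    then show ?thesis using insert.IH[of I r] insert.prems insert.hyps by auto
  next
    case False
    then obtain k where k: "k \<in> I" "r k w0 \<noteq> 0" by auto
    define r' where "r' = (\<lambda>i w. r i w - (r i w0 / r k w0) * r k w)"
    have cardI: "card (I - {k}) = card I - 1" using k insert.prems by auto
    have "\<forall>i\<in>I - {k}. \<forall>j\<in>I - {k}. (\<Sum>w\<in>W. r' i w * s j w) = (if i = j then c else 0)"
    proof (intro ballI)
      fix i j assume i: "i \<in> I - {k}" and j: "j \<in> I - {k}"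
      have z: "r' i w0 = 0" using k by (simp add: r'_def)
      have "(\<Sum>w\<in>W. r' i w * s j w) = (\<Sum>w\<in>insert w0 W. r' i w * s j w)"
        using z insert.hyps by simp
      also have "\<dots> = (\<Sum>w\<in>insert w0 W. r i w * s j w) - (r i w0 / r k w0) * (\<Sum>w\<in>insert w0 W. r k w * s j w)"
        by (simp add: r'_def algebra_simps sum_subtractf sum_distrib_left)
      also have "\<dots> = (if i = j then c else 0)"
        using insert.prems(4) i j k by auto
      finally show "(\<Sum>w\<in>W. r' i w * s j w) = (if i = j then c else 0)" .
    qed
    moreover have "card W < card (I - {k})" using cardI insert.prems(2) insert.hyps by simp
    ultimately show ?thesis using insert.IH[of "I - {k}" r'] insert.prems(1,3) by blast
  qed
qed

definition ee :: "'a \<Rightarrow> 'a \<Rightarrow> 'a \<Rightarrow> 'a \<Rightarrow> 'k::field" where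
  "ee p q = (\<lambda>u v. if u = p \<and> v = q then 1 else 0)"

lemma ee_fin:
  assumes "p \<in> C" "q \<in> C" "le p q"
  shows "(ee p q :: 'a \<Rightarrow> 'a \<Rightarrow> 'k::field) \<in> finitary_space C le"
proof -
  have "{(u, v). u \<in> C \<and> v \<in> C \<and> le x u \<and> le u v \<and> u \<noteq> v \<and> le v y \<and> (ee p q :: 'a \<Rightarrow> 'a \<Rightarrow> 'k) u v \<noteq> 0} \<subseteq> {(p,q)}" for x y
    by (auto simp: ee_def split: if_splits)
  then show ?thesis using assms
    by (auto simp: finitary_space_def incidence_space_def ee_def intro: finite_subset)
qed

lemma ee_conv:
  assumes "poset_on C le" "x \<in> C" "y \<in> C" "z \<in> C" "z' \<in> C" "le x z" "le z y" "le x z'" "le z' y"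
  shows "conv C le (ee x z) (ee z' y) = (if z = z' then ee x y else (\<lambda>u v. 0 :: 'k::field))"
proof (rule ext, rule ext)
  fix u v
  have lexy: "le x y" using assms unfolding poset_on_def by blast
  have S: "{w \<in> C. le u w \<and> le w v \<and> (ee x z u w :: 'k) * ee z' y w v \<noteq> 0}
        = (if u = x \<and> v = y \<and> z = z' then {z} else {})"
    using assms by (auto simp: ee_def split: if_splits)
  show "conv C le (ee x z) (ee z' y) u v = (if z = z' then ee x y else (\<lambda>u v. 0)) u v"
    unfolding conv_def S using assms lexy by (auto simp: ee_def)
qed

theorem corollary5:
  fixes P :: "'a set" and le :: "'a \<Rightarrow> 'a \<Rightarrow> bool"
    and Q :: "'b set" and le' :: "'b \<Rightarrow> 'b \<Rightarrow> bool"
  assumes "poset_on P le" and "\<not> locally_finite_on P le"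
    and "poset_on Q le'" and "locally_finite_on Q le'"
  shows "\<not> (\<exists>\<phi> :: ('a \<Rightarrow> 'a \<Rightarrow> 'k::field) \<Rightarrow> ('b \<Rightarrow> 'b \<Rightarrow> 'k).
            alg_iso P le (finitary_space P le) Q le' (incidence_space Q le') \<phi>)"
proof
  assume "\<exists>\<phi> :: ('a \<Rightarrow> 'a \<Rightarrow> 'k::field) \<Rightarrow> ('b \<Rightarrow> 'b \<Rightarrow> 'k).
            alg_iso P le (finitary_space P le) Q le' (incidence_space Q le') \<phi>"
  then obtain \<phi> :: "('a \<Rightarrow> 'a \<Rightarrow> 'k::field) \<Rightarrow> ('b \<Rightarrow> 'b \<Rightarrow> 'k)" where
    iso: "alg_iso P le (finitary_space P le) Q le' (incidence_space Q le') \<phi>" by blast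
  obtain x y where xy: "x \<in> P" "y \<in> P" and inf: "infinite {z\<in>P. le x z \<and> le z y}"
    using assms(2) unfolding locally_finite_on_def by blast
  define Z where "Z = {z\<in>P. le x z \<and> le z y}"
  obtain z0 where z0: "z0 \<in> Z" using inf unfolding Z_def by (metis finite.emptyI ex_in_conv)
  have lexy: "le x y" using assms(1) xy z0 unfolding poset_on_def Z_def by blast
  have iso': "bij_betw \<phi> (finitary_space P le) (incidence_space Q le') \<and>
     (\<forall>\<alpha>\<in>finitary_space P le. \<forall>\<beta>\<in>finitary_space P le. \<phi> (\<lambda>x y. \<alpha> x y + \<beta> x y) = (\<lambda>x y. \<phi> \<alpha> x y + \<phi> \<beta> x y)) \<and>
     (\<forall>\<alpha>\<in>finitary_space P le. \<forall>\<beta>\<in>finitary_space P le. \<phi> (conv P le \<alpha> \<beta>) = conv Q le' (\<phi> \<alpha>) (\<phi> \<beta>)) \<and>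
     (\<forall>c. \<forall>\<alpha>\<in>finitary_space P le. \<phi> (\<lambda>x y. c * \<alpha> x y) = (\<lambda>x y. c * \<phi> \<alpha> x y))"
    using iso unfolding alg_iso_def .
  have bij: "bij_betw \<phi> (finitary_space P le) (incidence_space Q le')" using iso' by (rule conjunct1)
  have mul: "\<And>\<alpha> \<beta>. \<alpha> \<in> finitary_space P le \<Longrightarrow> \<beta> \<in> finitary_space P le \<Longrightarrow> \<phi> (conv P le \<alpha> \<beta>) = conv Q le' (\<phi> \<alpha>) (\<phi> \<beta>)"
    using iso' by blast
  have sc: "\<And>c \<alpha>. \<alpha> \<in> finitary_space P le \<Longrightarrow> \<phi> (\<lambda>x y. c * \<alpha> x y) = (\<lambda>x y. c * \<phi> \<alpha> x y)"
    using iso' by blast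
  have zero_fin: "(\<lambda>u v. 0) \<in> finitary_space P le"
    by (auto simp: finitary_space_def incidence_space_def)
  have phi0: "\<phi> (\<lambda>u v. 0) = (\<lambda>u v. 0)"
    using sc[OF zero_fin, of 0] by simp
  define A where "A = (\<lambda>z. \<phi> (ee x z))"
  define B where "B = (\<lambda>z. \<phi> (ee z y))"
  define C where "C = \<phi> (ee x y)"
  have exy: "(ee x y :: 'a \<Rightarrow> 'a \<Rightarrow> 'k) \<in> finitary_space P le" by (rule ee_fin[where le=le, OF xy lexy])
  have Cne: "C \<noteq> (\<lambda>u v. 0)"
  proof
    assume "C = (\<lambda>u v. 0)"
    then have "\<phi> (ee x y) = \<phi> (\<lambda>u v. 0)" using phi0 C_def by simp
    then have "(ee x y :: 'a \<Rightarrow> 'a \<Rightarrow> 'k) = (\<lambda>u v. 0)"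
      using inj_onD[OF bij_betw_imp_inj_on[OF bij] _ exy zero_fin] by blast
    then have "(ee x y :: 'a \<Rightarrow> 'a \<Rightarrow> 'k) x y = 0" by simp
    then show False by (simp add: ee_def)
  qed
  have prod: "conv Q le' (A z) (B z') = (if z = z' then C else (\<lambda>u v. 0))"
    if "z \<in> Z" "z' \<in> Z" for z z'
  proof -
    have f1: "(ee x z :: 'a \<Rightarrow> 'a \<Rightarrow> 'k) \<in> finitary_space P le" using that unfolding Z_def by (intro ee_fin) (use xy in auto)
    have f2: "(ee z' y :: 'a \<Rightarrow> 'a \<Rightarrow> 'k) \<in> finitary_space P le" using that unfolding Z_def by (intro ee_fin) (use xy in auto)
    have "conv Q le' (A z) (B z') = \<phi> (conv P le (ee x z) (ee z' y))"
      using mul[OF f1 f2] unfolding A_def B_def by simp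
    also have "\<dots> = (if z = z' then C else (\<lambda>u v. 0))"
    proof -
      have e: "conv P le (ee x z) (ee z' y) = (if z = z' then ee x y else (\<lambda>u v. 0 :: 'k))"
        using ee_conv[OF assms(1) xy(1) xy(2), of z z'] that unfolding Z_def by blast
      show ?thesis unfolding e C_def using phi0 by simp
    qed
    finally show ?thesis .
  qed
  obtain u v where uv: "C u v \<noteq> 0" using Cne by blast
  have uvQ: "u \<in> Q" "v \<in> Q" "le' u v"
    using prod[OF z0 z0] uv by (auto simp: conv_def split: if_splits)
  define W where "W = {w\<in>Q. le' u w \<and> le' w v}"
  have finW: "finite W" using assms(4) uvQ unfolding locally_finite_on_def W_def by blast
  have sumeq: "conv Q le' (A z) (B z') u v = (\<Sum>w\<in>W. A z u w * B z' w v)" for z z'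
  proof -
    have "conv Q le' (A z) (B z') u v = (\<Sum>w\<in>{w \<in> Q. le' u w \<and> le' w v \<and> A z u w * B z' w v \<noteq> 0}. A z u w * B z' w v)"
      using uvQ by (simp add: conv_def)
    also have "\<dots> = (\<Sum>w\<in>W. A z u w * B z' w v)"
      by (rule sum.mono_neutral_left) (use finW in \<open>auto simp: W_def\<close>)
    finally show ?thesis .
  qed
  obtain I where I: "I \<subseteq> Z" "finite I" "card I = Suc (card W)"
    using infinite_arbitrarily_large[of Z "Suc (card W)"] inf Z_def by blast
  show False
  proof (rule no_biorth[where r="\<lambda>i w. A i u w" and c="C u v" and s="\<lambda>j w. B j w v", OF finW I(2)])
    show "card W < card I" using I by simp
    show "C u v \<noteq> 0" by (rule uv)
    show "\<forall>i\<in>I. \<forall>j\<in>I. (\<Sum>w\<in>W. A i u w * B j w v) = (if i = j then C u v else 0)"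
    proof (intro ballI)
      fix i j assume "i \<in> I" "j \<in> I"
      then have "i \<in> Z" "j \<in> Z" using I(1) by auto
      have "(\<Sum>w\<in>W. A i u w * B j w v) = conv Q le' (A i) (B j) u v" by (rule sumeq[symmetric])
      also have "\<dots> = (if i = j then C u v else 0)" using prod[OF \<open>i \<in> Z\<close> \<open>j \<in> Z\<close>] by simp
      finally show "(\<Sum>w\<in>W. A i u w * B j w v) = (if i = j then C u v else 0)" .
    qed
  qed
qed

end
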